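(* Every Bézout ring $R$ whose space of minimal prime ideals $\mathrm{MinSpec}(R)$ (with the Zariski topology) is compact is an Hermite ring.
   Context: All rings are commutative with identity. $R$ is Bézout if every finitely generated ideal is principal. $R$ is Hermite if for every $a,b\in R$ there exist $d,a',b'\in R$ with $a=da'$, $b=db'$ and $Ra'+Rb'=R$. *)

theory Defs
  imports "HOL-Analysis.Analysis"
begin

definition is_ideal :: "'a::comm_ring_1 set \<Rightarrow> bool" where
  "is_ideal I \<longleftrightarrow> 0 \<in> I \<and> (\<forall>x\<in>I. \<forall>y\<in>I. x + y \<in> I) \<and> (\<forall>r. \<forall>x\<in>I. r * x \<in> I)"

definition ideal_gen :: "'a::comm_ring_1 set \<Rightarrow> 'a set" where
  "ideal_gen S = \<Inter>{I. is_ideal I \<and> S \<subseteq> I}"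

definition finitely_generated_ideal :: "'a::comm_ring_1 set \<Rightarrow> bool" where
  "finitely_generated_ideal I \<longleftrightarrow> (\<exists>S. finite S \<and> I = ideal_gen S)"

definition principal_ideal :: "'a::comm_ring_1 set \<Rightarrow> bool" where
  "principal_ideal I \<longleftrightarrow> (\<exists>d. I = {r * d | r. True})"

definition bezout_ring :: "'a::comm_ring_1 itself \<Rightarrow> bool" where
  "bezout_ring _ \<longleftrightarrow> (\<forall>I::'a set. finitely_generated_ideal I \<longrightarrow> principal_ideal I)"

definition hermite_ring :: "'a::comm_ring_1 itself \<Rightarrow> bool" where
  "hermite_ring _ \<longleftrightarrow> (\<forall>a b::'a. \<exists>d a' b'. a = d * a' \<and> b = d * b' \<and>
      (\<exists>x y. x * a' + y * b' = 1))"

definition prime_ideal :: "'a::comm_ring_1 set \<Rightarrow> bool" where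
  "prime_ideal P \<longleftrightarrow> is_ideal P \<and> P \<noteq> UNIV \<and> (\<forall>a b. a * b \<in> P \<longrightarrow> a \<in> P \<or> b \<in> P)"

definition Spec :: "'a::comm_ring_1 itself \<Rightarrow> 'a set set" where
  "Spec _ = {P. prime_ideal P}"

definition minimal_prime :: "'a::comm_ring_1 set \<Rightarrow> bool" where
  "minimal_prime P \<longleftrightarrow> prime_ideal P \<and> (\<forall>Q. prime_ideal Q \<and> Q \<subseteq> P \<longrightarrow> Q = P)"

definition MinSpec :: "'a::comm_ring_1 itself \<Rightarrow> 'a set set" where
  "MinSpec _ = {P. minimal_prime P}"

definition basic_open :: "'a::comm_ring_1 \<Rightarrow> 'a set set" where
  "basic_open a = {P. prime_ideal P \<and> a \<notin> P}"

text \<open>Zariski topology on Spec: generated by the basic opens D(a)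
  (open sets = complements of V(S) = unions of D(a)).\<close>
definition zariski :: "'a::comm_ring_1 itself \<Rightarrow> 'a set topology" where
  "zariski _ = topology_generated_by (range (basic_open :: 'a \<Rightarrow> 'a set set))"

definition minspec_topology :: "'a::comm_ring_1 itself \<Rightarrow> 'a set topology" where
  "minspec_topology T = subtopology (zariski T) (MinSpec T)"

end

theory Submission
  imports Defs
begin

lemma ideal_0: "is_ideal I \<Longrightarrow> 0 \<in> I" by (simp add: is_ideal_def)
lemma ideal_add: "is_ideal I \<Longrightarrow> x \<in> I \<Longrightarrow> y \<in> I \<Longrightarrow> x + y \<in> I" by (simp add: is_ideal_def)
lemma ideal_multL: "is_ideal I \<Longrightarrow> x \<in> I \<Longrightarrow> r * x \<in> I" by (simp add: is_ideal_def)
lemma ideal_multR: "is_ideal I \<Longrightarrow> x \<in> I \<Longrightarrow> x * r \<in> I"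
  by (metis ideal_multL mult.commute)
lemma ideal_uminus: "is_ideal I \<Longrightarrow> x \<in> I \<Longrightarrow> - x \<in> I"
  using ideal_multL[of I x "-1"] by simp
lemma ideal_diff: "is_ideal I \<Longrightarrow> x \<in> I \<Longrightarrow> y \<in> I \<Longrightarrow> x - y \<in> I"
  using ideal_add[of I x "-y"] ideal_uminus[of I y] by simp

lemma prime_ideal_ideal: "prime_ideal P \<Longrightarrow> is_ideal P" by (simp add: prime_ideal_def)
lemma prime_one: "prime_ideal P \<Longrightarrow> (1::'a::comm_ring_1) \<notin> P"
proof
  assume p: "prime_ideal P" and "1 \<in> P"
  then have "\<And>x. x \<in> P" using ideal_multL[OF prime_ideal_ideal[OF p], of 1] by (metis mult.right_neutral)
  with p show False by (auto simp: prime_ideal_def)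
qed
lemma prime_mult: "prime_ideal P \<Longrightarrow> a * b \<in> P \<Longrightarrow> a \<in> P \<or> b \<in> P"
  by (simp add: prime_ideal_def)
lemma prime_power: "prime_ideal P \<Longrightarrow> a ^ n \<in> P \<Longrightarrow> a \<in> P"
  by (induction n) (auto simp: prime_one dest: prime_mult)

lemma prime_avoiding:
  fixes T :: "'a::comm_ring_1 set"
  assumes T1: "1 \<in> T" and Tm: "\<And>x y. x \<in> T \<Longrightarrow> y \<in> T \<Longrightarrow> x * y \<in> T" and T0: "0 \<notin> T"
  shows "\<exists>Q. prime_ideal Q \<and> Q \<inter> T = {}"
proof -
  define A where "A = {I. is_ideal I \<and> I \<inter> T = {}}"
  have "\<forall>C\<in>chains A. \<exists>U\<in>A. \<forall>X\<in>C. X \<subseteq> U"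
  proof
  fix C assume C: "C \<in> chains A"
  show "\<exists>U\<in>A. \<forall>X\<in>C. X \<subseteq> U"
  proof (cases "C = {}")
    case True
    have "{0} \<in> A" using T0 by (auto simp: A_def is_ideal_def)
    then show ?thesis using True by blast
  next
    case False
    have CA: "C \<subseteq> A" using C by (simp add: chains_def)
    have ch: "\<And>X Y. X \<in> C \<Longrightarrow> Y \<in> C \<Longrightarrow> X \<subseteq> Y \<or> Y \<subseteq> X" using C chainsD by blast
    have "is_ideal (\<Union>C)"
      unfolding is_ideal_def
    proof (intro conjI ballI allI)
      show "0 \<in> \<Union>C" using False CA by (auto simp: A_def is_ideal_def)
    next
      fix x y assume "x \<in> \<Union>C" "y \<in> \<Union>C"
      then obtain X Y where XY: "X \<in> C" "Y \<in> C" "x \<in> X" "y \<in> Y" by blast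
      from ch[OF XY(1,2)] show "x + y \<in> \<Union>C"
      proof
        assume "X \<subseteq> Y" then have "x + y \<in> Y" using XY CA ideal_add[of Y x y] by (auto simp: A_def)
        then show ?thesis using XY by blast
      next
        assume "Y \<subseteq> X" then have "x + y \<in> X" using XY CA ideal_add[of X x y] by (auto simp: A_def)
        then show ?thesis using XY by blast
      qed
    next
      fix r x assume "x \<in> \<Union>C"
      then show "r * x \<in> \<Union>C" using CA ideal_multL by (fastforce simp: A_def)
    qed
    moreover have "\<Union>C \<inter> T = {}" using CA by (auto simp: A_def)
    ultimately have "\<Union>C \<in> A" by (auto simp: A_def)
    then show ?thesis by blast
  qed
  qed
  from Zorn_Lemma2[OF this] obtain M where M: "M \<in> A" and Mmax0: "\<forall>X\<in>A. M \<subseteq> X \<longrightarrow> X = M"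
    by blast
  have Mmax: "\<And>X. X \<in> A \<Longrightarrow> M \<subseteq> X \<Longrightarrow> X = M" using Mmax0 by blast
  have Mi: "is_ideal M" and MT: "M \<inter> T = {}" using M by (auto simp: A_def)
  have ext: "\<exists>m r. m \<in> M \<and> m + r * a \<in> T" if "a \<notin> M" for a
  proof (rule ccontr)
    assume nex: "\<not> ?thesis"
    define X where "X = {m + r * a | m r. m \<in> M}"
    have "is_ideal X" unfolding is_ideal_def X_def
    proof (intro conjI ballI allI)
      show "0 \<in> {m + r * a |m r. m \<in> M}" using ideal_0[OF Mi] by (metis (mono_tags, lifting) add.right_neutral mem_Collect_eq mult_zero_left)
    next
      fix x y assume "x \<in> {m + r * a |m r. m \<in> M}" "y \<in> {m + r * a |m r. m \<in> M}"
      then obtain m1 r1 m2 r2 where "x = m1 + r1 * a" "y = m2 + r2 * a" "m1 \<in> M" "m2 \<in> M" by blast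
      then show "x + y \<in> {m + r * a |m r. m \<in> M}"
        by (intro CollectI exI[of _ "m1+m2"] exI[of _ "r1+r2"]) (auto simp: algebra_simps ideal_add[OF Mi])
    next
      fix s x assume "x \<in> {m + r * a |m r. m \<in> M}"
      then obtain m1 r1 where "x = m1 + r1 * a" "m1 \<in> M" by blast
      then have "s * x = s * m1 + (s * r1) * a" "s * m1 \<in> M" by (auto simp: algebra_simps intro: ideal_multR[OF Mi])
      then show "s * x \<in> {m + r * a |m r. m \<in> M}" by blast
    qed
    moreover have "X \<inter> T = {}" using nex by (auto simp: X_def)
    moreover have "M \<subseteq> X"
    proof
      fix m assume "m \<in> M" then have "m = m + 0 * a \<and> m \<in> M" by simp
      then show "m \<in> X" unfolding X_def by blast
    qed
    ultimately have "X = M" using Mmax by (auto simp: A_def)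
    moreover have "a \<in> X" unfolding X_def using ideal_0[OF Mi] by (metis (mono_tags, lifting) add_0 mem_Collect_eq mult_1)
    ultimately show False using that by simp
  qed
  have "prime_ideal M" unfolding prime_ideal_def
  proof (intro conjI allI impI Mi)
    show "M \<noteq> UNIV" using MT T1 by auto
  next
    fix a b assume ab: "a * b \<in> M"
    show "a \<in> M \<or> b \<in> M"
    proof (rule ccontr)
      assume "\<not> (a \<in> M \<or> b \<in> M)"
      then obtain m1 r1 m2 r2 where h: "m1 \<in> M" "m1 + r1 * a \<in> T" "m2 \<in> M" "m2 + r2 * b \<in> T"
        using ext by blast
      have "(m1 + r1 * a) * (m2 + r2 * b) = m1 * (m2 + r2 * b) + (r1 * a) * m2 + (r1 * r2) * (a * b)"
        by (simp add: algebra_simps)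
      also have "\<dots> \<in> M"
        using ideal_multR[OF Mi h(1), of "m2 + r2 * b"] ideal_multL[OF Mi h(3), of "r1 * a"] ideal_multL[OF Mi ab, of "r1 * r2"]
        by (intro ideal_add[OF Mi]) auto
      finally show False using Tm[OF h(2) h(4)] MT by blast
    qed
  qed
  then show ?thesis using MT by blast
qed

lemma inter_chain_prime:
  fixes C :: "'a::comm_ring_1 set set"
  assumes ne: "C \<noteq> {}" and pr: "\<And>Q. Q \<in> C \<Longrightarrow> prime_ideal Q"
    and ch: "\<And>X Y. X \<in> C \<Longrightarrow> Y \<in> C \<Longrightarrow> X \<subseteq> Y \<or> Y \<subseteq> X"
  shows "prime_ideal (\<Inter>C)"
  unfolding prime_ideal_def
proof (intro conjI allI impI)
  show "is_ideal (\<Inter>C)" unfolding is_ideal_def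
    using pr by (auto simp: prime_ideal_def is_ideal_def)
  show "\<Inter>C \<noteq> UNIV" using ne pr prime_one by blast
next
  fix a b assume ab: "a * b \<in> \<Inter>C"
  show "a \<in> \<Inter>C \<or> b \<in> \<Inter>C"
  proof (rule ccontr)
    assume "\<not> ?thesis"
    then obtain X Y where XY: "X \<in> C" "Y \<in> C" "a \<notin> X" "b \<notin> Y" by blast
    from ch[OF XY(1,2)] show False
    proof
      assume "X \<subseteq> Y"
      then show False using prime_mult[OF pr[OF XY(1)], of a b] ab XY by blast
    next
      assume "Y \<subseteq> X"
      then show False using prime_mult[OF pr[OF XY(2)], of a b] ab XY by blast
    qed
  qed
qed

lemma minimal_prime_below:
  fixes P :: "'a::comm_ring_1 set"
  assumes P: "prime_ideal P"
  shows "\<exists>Q. minimal_prime Q \<and> Q \<subseteq> P"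
proof -
  define A where "A = {Q. prime_ideal Q \<and> Q \<subseteq> P}"
  have po: "partial_order_on A (relation_of (\<lambda>x y. y \<subseteq> x) A)"
    by (auto simp: partial_order_on_def preorder_on_def refl_on_def trans_on_def antisym_on_def relation_of_def)
  have "\<exists>u\<in>A. \<forall>a\<in>C. u \<subseteq> a" if C: "C \<in> Chains (relation_of (\<lambda>x y. y \<subseteq> x) A)" for C
  proof (cases "C = {}")
    case True then show ?thesis using P by (auto simp: A_def)
  next
    case False
    have CA: "C \<subseteq> A" using C by (auto simp: Chains_def relation_of_def)
    have ch: "\<And>X Y. X \<in> C \<Longrightarrow> Y \<in> C \<Longrightarrow> X \<subseteq> Y \<or> Y \<subseteq> X"
      using C by (auto simp: Chains_def relation_of_def)
    have "prime_ideal (\<Inter>C)" using inter_chain_prime[OF False _ ch] CA by (auto simp: A_def)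
    moreover have "\<Inter>C \<subseteq> P" using CA False by (auto simp: A_def)
    ultimately show ?thesis by (auto simp: A_def)
  qed
  from predicate_Zorn[OF po this] obtain m where m: "m \<in> A" and mm: "\<forall>a\<in>A. a \<subseteq> m \<longrightarrow> a = m"
    by blast
  have "minimal_prime m" unfolding minimal_prime_def
    using m mm by (auto simp: A_def)
  then show ?thesis using m by (auto simp: A_def)
qed

lemma nilpotent_of_min:
  fixes z :: "'a::comm_ring_1"
  assumes "\<And>P. minimal_prime P \<Longrightarrow> z \<in> P"
  shows "\<exists>n. z ^ n = 0"
proof (rule ccontr)
  assume nz: "\<not> (\<exists>n. z ^ n = 0)"
  have "\<exists>Q. prime_ideal Q \<and> Q \<inter> range (\<lambda>n. z ^ n) = {}"
  proof (rule prime_avoiding)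
    show "1 \<in> range (\<lambda>n. z ^ n)" by (metis power_0 rangeI)
    show "\<And>x y. x \<in> range (\<lambda>n. z ^ n) \<Longrightarrow> y \<in> range (\<lambda>n. z ^ n) \<Longrightarrow> x * y \<in> range (\<lambda>n. z ^ n)"
      by (auto simp: power_add[symmetric])
    show "0 \<notin> range (\<lambda>n. z ^ n)" using nz by auto
  qed
  then obtain Q where Q: "prime_ideal Q" "Q \<inter> range (\<lambda>n. z ^ n) = {}" by blast
  obtain P where P: "minimal_prime P" "P \<subseteq> Q" using minimal_prime_below[OF Q(1)] by blast
  have "z \<in> P" using assms P by blast
  then have "z ^ 1 \<in> Q" using P by auto
  then show False using Q by blast
qed

lemma min_prime_ann:
  fixes a :: "'a::comm_ring_1"
  assumes P: "minimal_prime P" and a: "a \<in> P"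
  shows "\<exists>s. s \<notin> P \<and> (\<exists>n. (s * a) ^ n = 0)"
proof (rule ccontr)
  assume nex: "\<not> ?thesis"
  have Pp: "prime_ideal P" using P by (simp add: minimal_prime_def)
  define T where "T = {s * a ^ n | s n. s \<notin> P}"
  have "\<exists>Q. prime_ideal Q \<and> Q \<inter> T = {}"
  proof (rule prime_avoiding)
    show "1 \<in> T" unfolding T_def using prime_one[OF Pp] by (metis (mono_tags, lifting) mem_Collect_eq mult_1 power_0)
  next
    fix x y assume "x \<in> T" "y \<in> T"
    then obtain s n t m where "x = s * a ^ n" "y = t * a ^ m" "s \<notin> P" "t \<notin> P" unfolding T_def by blast
    then have "x * y = (s * t) * a ^ (n + m)" "s * t \<notin> P"
      using prime_mult[OF Pp] by (auto simp: power_add algebra_simps)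
    then show "x * y \<in> T" unfolding T_def by blast
  next
    show "0 \<notin> T"
    proof
      assume "0 \<in> T"
      then obtain s n where sn: "0 = s * a ^ n" "s \<notin> P" unfolding T_def by blast
      have "(s * a) ^ (Suc n) = s ^ n * (s * a ^ n) * a" by (simp add: power_mult_distrib algebra_simps)
      also have "\<dots> = 0" using sn by simp
      finally show False using nex sn by blast
    qed
  qed
  then obtain Q where Q: "prime_ideal Q" "Q \<inter> T = {}" by blast
  have "Q \<subseteq> P"
  proof
    fix q assume "q \<in> Q"
    show "q \<in> P"
    proof (rule ccontr)
      assume "q \<notin> P" then have "q * a ^ 0 \<in> T" unfolding T_def by blast
      then show False using Q \<open>q \<in> Q\<close> by auto
    qed
  qed
  then have "Q = P" using P Q by (auto simp: minimal_prime_def)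
  moreover have "1 * a ^ 1 \<in> T" unfolding T_def using prime_one[OF Pp] by blast
  ultimately show False using Q a by auto
qed

lemma nilpotent_in_prime:
  fixes x :: "'a::comm_ring_1"
  shows "prime_ideal P \<Longrightarrow> x ^ n = 0 \<Longrightarrow> x \<in> P"
  using prime_power[of P x n] ideal_0[OF prime_ideal_ideal] by force

lemma unit_of_nil:
  fixes z :: "'a::comm_ring_1"
  assumes "z ^ n = 0"
  shows "\<exists>w. (1 + z) * w = 1"
proof -
  have "1 - (-z) ^ n = (1 - (-z)) * (\<Sum>i<n. (-z) ^ i)" by (rule one_diff_power_eq)
  moreover have "(-z) ^ n = 0" using assms by (simp add: power_minus')
  ultimately show ?thesis by (metis diff_minus_eq_add diff_zero)
qed

lemma ideal_gen_sub: "S \<subseteq> ideal_gen S"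
  by (auto simp: ideal_gen_def)

lemma ideal_gen_least: "is_ideal J \<Longrightarrow> S \<subseteq> J \<Longrightarrow> ideal_gen S \<subseteq> J"
  by (auto simp: ideal_gen_def)

lemma bezout_fin:
  fixes S :: "'a::comm_ring_1 set"
  assumes B: "bezout_ring TYPE('a)" and fin: "finite S"
  shows "\<exists>g. g \<in> ideal_gen S \<and> (\<forall>x\<in>ideal_gen S. \<exists>r. x = r * g)"
proof -
  have "finitely_generated_ideal (ideal_gen S)" using fin by (auto simp: finitely_generated_ideal_def)
  then have "principal_ideal (ideal_gen S)" using B by (simp add: bezout_ring_def)
  then obtain d where d: "ideal_gen S = {r * d | r. True}" by (auto simp: principal_ideal_def)
  have "d \<in> ideal_gen S" unfolding d by (metis (mono_tags, lifting) mem_Collect_eq mult_1)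
  then show ?thesis using d by blast
qed

lemma bezout2:
  fixes a b :: "'a::comm_ring_1"
  assumes B: "bezout_ring TYPE('a)"
  shows "\<exists>c x y a0 b0. a = c * a0 \<and> b = c * b0 \<and> c = x * a + y * b"
proof -
  obtain g where g: "g \<in> ideal_gen {a, b}" "\<forall>x\<in>ideal_gen {a, b}. \<exists>r. x = r * g"
    using bezout_fin[OF B, of "{a,b}"] by auto
  define J where "J = {x * a + y * b | x y. True}"
  have "is_ideal J" unfolding is_ideal_def J_def
  proof (intro conjI ballI allI)
    show "0 \<in> {x * a + y * b |x y. True}" by (metis (mono_tags, lifting) add_0 mem_Collect_eq mult_zero_left)
  next
    fix u v assume "u \<in> {x * a + y * b |x y. True}" "v \<in> {x * a + y * b |x y. True}"
    then obtain x1 y1 x2 y2 where "u = x1 * a + y1 * b" "v = x2 * a + y2 * b" by blast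
    then have "u + v = (x1 + x2) * a + (y1 + y2) * b" by (simp add: algebra_simps)
    then show "u + v \<in> {x * a + y * b |x y. True}" by blast
  next
    fix r u assume "u \<in> {x * a + y * b |x y. True}"
    then obtain x1 y1 where "u = x1 * a + y1 * b" by blast
    then have "r * u = (r * x1) * a + (r * y1) * b" by (simp add: algebra_simps)
    then show "r * u \<in> {x * a + y * b |x y. True}" by blast
  qed
  moreover have "{a, b} \<subseteq> J"
  proof -
    have "a = 1 * a + 0 * b" "b = 0 * a + 1 * b" by simp_all
    then show ?thesis unfolding J_def by blast
  qed
  ultimately have "g \<in> J" using ideal_gen_least g(1) by blast
  then obtain x y where "g = x * a + y * b" unfolding J_def by blast
  moreover obtain a0 where "a = a0 * g" using g(2) ideal_gen_sub[of "{a,b}"] by blast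
  moreover obtain b0 where "b = b0 * g" using g(2) ideal_gen_sub[of "{a,b}"] by blast
  ultimately show ?thesis by (metis mult.commute)
qed

lemma topspace_minspec: "topspace (minspec_topology TYPE('a::comm_ring_1)) = MinSpec TYPE('a)"
proof -
  have "MinSpec TYPE('a) \<subseteq> \<Union> (range (basic_open :: 'a \<Rightarrow> 'a set set))"
  proof
    fix P :: "'a set" assume "P \<in> MinSpec TYPE('a)"
    then have "P \<in> basic_open 1"
      by (auto simp: MinSpec_def minimal_prime_def basic_open_def prime_one)
    then show "P \<in> \<Union> (range basic_open)" by blast
  qed
  then show ?thesis by (auto simp: minspec_topology_def zariski_def)
qed

lemma open_minspec: "openin (minspec_topology TYPE('a::comm_ring_1)) (basic_open (s::'a) \<inter> MinSpec TYPE('a))"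
  unfolding minspec_topology_def zariski_def openin_subtopology
  by (intro exI[of _ "basic_open s"] conjI topology_generated_by_Basis) auto

lemma compact_sep:
  fixes c :: "'a::comm_ring_1"
  assumes B: "bezout_ring TYPE('a)" and K: "compact_space (minspec_topology TYPE('a))"
  shows "\<exists>g. \<forall>P. minimal_prime P \<longrightarrow> (c \<in> P \<longrightarrow> g \<notin> P) \<and> g * c \<in> P"
proof -
  define Sc where "Sc = {s::'a. \<forall>Q. minimal_prime Q \<longrightarrow> s * c \<in> Q}"
  define h where "h = (\<lambda>s::'a. basic_open s \<inter> MinSpec TYPE('a))"
  have o1: "\<forall>U\<in>h ` ({c} \<union> Sc). openin (minspec_topology TYPE('a)) U"
    unfolding h_def using open_minspec by blast
  have o2: "topspace (minspec_topology TYPE('a)) \<subseteq> \<Union> (h ` ({c} \<union> Sc))"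
  proof
    fix P assume "P \<in> topspace (minspec_topology TYPE('a))"
    then have P: "minimal_prime P" by (simp add: topspace_minspec MinSpec_def)
    then have Pp: "prime_ideal P" by (simp add: minimal_prime_def)
    show "P \<in> \<Union> (h ` ({c} \<union> Sc))"
    proof (cases "c \<in> P")
      case False then have "P \<in> h c" using P Pp by (simp add: h_def basic_open_def MinSpec_def)
      then show ?thesis by blast
    next
      case True
      obtain s n where s: "s \<notin> P" "(s * c) ^ n = 0" using min_prime_ann[OF P True] by blast
      have "s \<in> Sc" unfolding Sc_def using s(2) nilpotent_in_prime minimal_prime_def by blast
      moreover have "P \<in> h s" using P Pp s by (simp add: h_def basic_open_def MinSpec_def)
      ultimately show ?thesis by blast
    qed
  qed
  have "\<exists>F. finite F \<and> F \<subseteq> h ` ({c} \<union> Sc) \<and> topspace (minspec_topology TYPE('a)) \<subseteq> \<Union>F"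
    using K[unfolded compact_space_alt, rule_format, OF conjI[OF o1 o2]] .
  then obtain F where F: "finite F" "F \<subseteq> h ` ({c} \<union> Sc)" "topspace (minspec_topology TYPE('a)) \<subseteq> \<Union>F"
    by blast
  then obtain C where C: "C \<subseteq> {c} \<union> Sc" "finite C" "F = h ` C"
    by (meson finite_subset_image)
  define C' where "C' = C - {c}"
  have C'S: "C' \<subseteq> Sc" and C'f: "finite C'" using C by (auto simp: C'_def)
  obtain g where g: "g \<in> ideal_gen C'" "\<forall>x\<in>ideal_gen C'. \<exists>r. x = r * g"
    using bezout_fin[OF B C'f] by blast
  have "is_ideal Sc" unfolding is_ideal_def
  proof (intro conjI ballI allI)
    show "0 \<in> Sc" unfolding Sc_def
      by (auto simp: minimal_prime_def prime_ideal_def is_ideal_def)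
  next
    fix x y assume xy: "x \<in> Sc" "y \<in> Sc"
    show "x + y \<in> Sc" unfolding Sc_def
    proof (intro CollectI allI impI)
      fix Q :: "'a set" assume Q: "minimal_prime Q"
      then have Qi: "is_ideal Q" by (simp add: minimal_prime_def prime_ideal_def)
      have "x * c \<in> Q" "y * c \<in> Q" using xy Q by (auto simp: Sc_def)
      then show "(x + y) * c \<in> Q" using ideal_add[OF Qi] by (simp add: distrib_right)
    qed
  next
    fix r x assume x: "x \<in> Sc"
    show "r * x \<in> Sc" unfolding Sc_def
    proof (intro CollectI allI impI)
      fix Q :: "'a set" assume Q: "minimal_prime Q"
      then have Qi: "is_ideal Q" by (simp add: minimal_prime_def prime_ideal_def)
      have "x * c \<in> Q" using x Q by (auto simp: Sc_def)
      then show "r * x * c \<in> Q" using ideal_multL[OF Qi] by (simp add: mult.assoc)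
    qed
  qed
  then have gS: "g \<in> Sc" using ideal_gen_least[OF _ C'S] g(1) by blast
  have "(c \<in> P \<longrightarrow> g \<notin> P) \<and> g * c \<in> P" if P: "minimal_prime P" for P
  proof (intro conjI impI)
    show "g * c \<in> P" using gS P by (simp add: Sc_def)
  next
    assume cP: "c \<in> P"
    have Pp: "prime_ideal P" using P by (simp add: minimal_prime_def)
    have "P \<in> topspace (minspec_topology TYPE('a))" using P by (simp add: topspace_minspec MinSpec_def)
    then obtain s where s: "s \<in> C" "P \<in> h s" using F C by blast
    then have sP: "s \<notin> P" by (simp add: h_def basic_open_def)
    then have "s \<noteq> c" using cP by blast
    then have "s \<in> C'" using s by (simp add: C'_def)
    then obtain r where "s = r * g" using g(2) ideal_gen_sub[of C'] by blast
    then show "g \<notin> P" using sP ideal_multL[OF prime_ideal_ideal[OF Pp]] by blast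
  qed
  then show ?thesis by blast
qed

lemma idem_sep:
  fixes c :: "'a::comm_ring_1"
  assumes B: "bezout_ring TYPE('a)" and K: "compact_space (minspec_topology TYPE('a))"
  shows "\<exists>f. \<forall>P. minimal_prime P \<longrightarrow> (c \<in> P \<and> f - 1 \<in> P) \<or> (c \<notin> P \<and> f \<in> P)"
proof -
  obtain g where g: "\<And>P. minimal_prime P \<Longrightarrow> (c \<in> P \<longrightarrow> g \<notin> P) \<and> g * c \<in> P"
    using compact_sep[OF B K] by blast
  obtain k m n g1 c1 where k: "g = k * g1" "c = k * c1" "k = m * g + n * c"
    using bezout2[OF B, of g c] by blast
  have "(c \<in> P \<and> m * g1 - 1 \<in> P) \<or> (c \<notin> P \<and> m * g1 \<in> P)" if P: "minimal_prime P" for P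
  proof -
    have Pp: "prime_ideal P" using P by (simp add: minimal_prime_def)
    have Pi: "is_ideal P" using Pp by (simp add: prime_ideal_def)
    have kP: "k \<notin> P"
    proof
      assume "k \<in> P"
      then have "g \<in> P" "c \<in> P" using k(1,2) ideal_multR[OF Pi] by auto
      then show False using g[OF P] by blast
    qed
    have "k * (1 - m * g1 - n * c1) = k - m * (k * g1) - n * (k * c1)" by (simp add: algebra_simps)
    also have "\<dots> = k - (m * g + n * c)" unfolding k(1) k(2) by (simp add: algebra_simps)
    also have "\<dots> = 0" using k(3) by simp
    finally have "k * (1 - m * g1 - n * c1) = 0" .
    then have "k * (1 - m * g1 - n * c1) \<in> P" using ideal_0[OF Pi] by simp
    then have e: "1 - m * g1 - n * c1 \<in> P" using kP prime_mult[OF Pp] by blast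
    show ?thesis
    proof (cases "c \<in> P")
      case True
      then have "c1 \<in> P" using k(2) kP prime_mult[OF Pp] by blast
      then have "n * c1 \<in> P" using ideal_multL[OF Pi] by blast
      then have "-(1 - m * g1 - n * c1) - n * c1 \<in> P" using e ideal_diff[OF Pi] ideal_uminus[OF Pi] by blast
      then show ?thesis using True by (simp add: algebra_simps)
    next
      case False
      then have "g \<in> P" using g[OF P] prime_mult[OF Pp] by blast
      then have "g1 \<in> P" using k(1) kP prime_mult[OF Pp] by blast
      then show ?thesis using False ideal_multL[OF Pi] by blast
    qed
  qed
  then show ?thesis by blast
qed

lemma cm_add: "is_ideal P \<Longrightarrow> x - x' \<in> P \<Longrightarrow> y - y' \<in> P \<Longrightarrow> (x + y) - (x' + y') \<in> P"
  using ideal_add[of P "x - x'" "y - y'"] by (simp add: algebra_simps)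
lemma cm_diff: "is_ideal P \<Longrightarrow> x - x' \<in> P \<Longrightarrow> y - y' \<in> P \<Longrightarrow> (x - y) - (x' - y') \<in> P"
  using ideal_diff[of P "x - x'" "y - y'"] by (simp add: algebra_simps)
lemma cm_mult: "is_ideal P \<Longrightarrow> x - x' \<in> P \<Longrightarrow> y - y' \<in> P \<Longrightarrow> (x * y) - (x' * y') \<in> P"
proof -
  assume P: "is_ideal P" and h: "x - x' \<in> P" "y - y' \<in> P"
  have "(x * y) - (x' * y') = (x - x') * y + x' * (y - y')" by (simp add: algebra_simps)
  also have "\<dots> \<in> P" using ideal_multR[OF P h(1)] ideal_multL[OF P h(2)] ideal_add[OF P] by blast
  finally show ?thesis .
qed
lemma cm_refl: "is_ideal P \<Longrightarrow> x - x \<in> P"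
  by (simp add: ideal_0)

lemma key_identity:
  fixes x y a' b' al be a0 b0 e :: "'a::comm_ring_1"
  shows "((x * a' + y * b') * al - b') * (a0 - be * e) + ((x * a' + y * b') * be + a') * (b0 + al * e) - 1
   = (x * a' + y * b') * (al * a0 + be * b0) + (a' * b0 - b' * a0) + e * (al * a' + be * b') - 1"
  by (simp add: algebra_simps)

theorem theorem3p3:
  assumes "bezout_ring TYPE('a::comm_ring_1)"
    and "compact_space (minspec_topology TYPE('a))"
  shows "hermite_ring TYPE('a)"
  unfolding hermite_ring_def
proof (intro allI)
  note B = assms(1) and K = assms(2)
  fix a b :: 'a
  obtain c x y a0 b0 where cab: "a = c * a0" "b = c * b0" "c = x * a + y * b"
    using bezout2[OF B, of a b] by blast
  define e where "e = 1 - x * a0 - y * b0"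
  have ce: "c * e = 0"
  proof -
    have "c * e = c - x * (c * a0) - y * (c * b0)" by (simp add: e_def algebra_simps)
    also have "\<dots> = c - (x * a + y * b)" by (simp flip: cab(1) cab(2))
    also have "\<dots> = 0" using cab(3) by simp
    finally show ?thesis .
  qed
  obtain c1 x1 y1 al be where c1ab: "a0 = c1 * al" "b0 = c1 * be" "c1 = x1 * a0 + y1 * b0"
    using bezout2[OF B, of a0 b0] by blast
  define e1 where "e1 = 1 - x1 * al - y1 * be"
  have ce1: "c1 * e1 = 0"
  proof -
    have "c1 * e1 = c1 - x1 * (c1 * al) - y1 * (c1 * be)" by (simp add: e1_def algebra_simps)
    also have "\<dots> = c1 - (x1 * a0 + y1 * b0)" by (simp flip: c1ab(1) c1ab(2))
    also have "\<dots> = 0" using c1ab(3) by simp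
    finally show ?thesis .
  qed
  obtain f where f: "\<And>P. minimal_prime P \<Longrightarrow> (c1 \<in> P \<and> f - 1 \<in> P) \<or> (c1 \<notin> P \<and> f \<in> P)"
    using idem_sep[OF B K, of c1] by blast
  define a' where "a' = al + f * (1 - al)"
  define b' where "b' = be * (1 - f)"
  define al' where "al' = x1 + (1 - x1) * f"
  define be' where "be' = y1"
  define U where "U = a0 - be' * e"
  define V where "V = b0 + al' * e"
  define W where "W = (x * a' + y * b') * al' - b'"
  define Z where "Z = (x * a' + y * b') * be' + a'"
  define E where "E = (x * a' + y * b') * (al' * a0 + be' * b0) + (a' * b0 - b' * a0) + e * (al' * a' + be' * b') - 1"
  have WZE: "W * U + Z * V - 1 = E"
    unfolding W_def Z_def U_def V_def E_def by (rule key_identity)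
  have EP: "E \<in> P" if P: "minimal_prime P" for P
  proof -
    have Pp: "prime_ideal P" using P by (simp add: minimal_prime_def)
    have Pi: "is_ideal P" using Pp by (simp add: prime_ideal_def)
    from f[OF P] show ?thesis
    proof
      assume h: "c1 \<in> P \<and> f - 1 \<in> P"
      have "a' - 1 = (f - 1) * (1 - al)" by (simp add: a'_def algebra_simps)
      then have h1: "a' - 1 \<in> P" using ideal_multR[OF Pi] h by metis
      have "b' - 0 = - (be * (f - 1))" by (simp add: b'_def algebra_simps)
      then have h2: "b' - 0 \<in> P" using ideal_multL[OF Pi] ideal_uminus[OF Pi] h by metis
      have "al' - 1 = (1 - x1) * (f - 1)" by (simp add: al'_def algebra_simps)
      then have h3: "al' - 1 \<in> P" using ideal_multL[OF Pi] h by metis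
      have h4: "a0 - 0 \<in> P" using c1ab(1) ideal_multR[OF Pi] h by simp
      have h5: "b0 - 0 \<in> P" using c1ab(2) ideal_multR[OF Pi] h by simp
      have "E - ((x * 1 + y * 0) * (1 * 0 + be' * 0) + (1 * 0 - 0 * 0) + e * (1 * 1 + be' * 0) - 1) \<in> P"
        unfolding E_def
        by (intro cm_add[OF Pi] cm_diff[OF Pi] cm_mult[OF Pi] cm_refl[OF Pi] h1 h2 h3 h4 h5)
      then have "E - (e - 1) \<in> P" by simp
      moreover have "e - 1 = - (x * (a0 - 0) + y * (b0 - 0))" by (simp add: e_def)
      then have "e - 1 \<in> P" using h4 h5 ideal_multL[OF Pi] ideal_add[OF Pi] ideal_uminus[OF Pi] by metis
      ultimately have "(E - (e - 1)) + (e - 1) \<in> P" using ideal_add[OF Pi] by blast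
      then show ?thesis by simp
    next
      assume h: "c1 \<notin> P \<and> f \<in> P"
      have "e1 \<in> P" using ce1 h prime_mult[OF Pp] ideal_0[OF Pi] by metis
      have "a' - al = f * (1 - al)" by (simp add: a'_def algebra_simps)
      then have h1: "a' - al \<in> P" using ideal_multR[OF Pi] h by metis
      have "b' - be = - (be * f)" by (simp add: b'_def algebra_simps)
      then have h2: "b' - be \<in> P" using ideal_multL[OF Pi] ideal_uminus[OF Pi] h by metis
      have "al' - x1 = (1 - x1) * f" by (simp add: al'_def algebra_simps)
      then have h3: "al' - x1 \<in> P" using ideal_multL[OF Pi] h by metis
      have "E - ((x * al + y * be) * (x1 * a0 + be' * b0) + (al * b0 - be * a0) + e * (x1 * al + be' * be) - 1) \<in> P"
        unfolding E_def
        by (intro cm_add[OF Pi] cm_diff[OF Pi] cm_mult[OF Pi] cm_refl[OF Pi] h1 h2 h3)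
      moreover have "(x * al + y * be) * (x1 * a0 + be' * b0) + (al * b0 - be * a0) + e * (x1 * al + be' * be) - 1
          = - (e * e1)"
      proof -
        have "(x * al + y * be) * (x1 * a0 + be' * b0) + (al * b0 - be * a0) + e * (x1 * al + be' * be) - 1
          = (x * al + y * be) * c1 + (al * b0 - be * a0) + e * (x1 * al + y1 * be) - 1"
          by (simp add: be'_def c1ab(3)[symmetric])
        also have "\<dots> = - (e * e1)"
          unfolding e_def e1_def c1ab(1) c1ab(2) by (simp add: algebra_simps)
        finally show ?thesis .
      qed
      moreover have "- (e * e1) \<in> P" using \<open>e1 \<in> P\<close> ideal_multL[OF Pi] ideal_uminus[OF Pi] by blast
      ultimately have "(E - (- (e * e1))) + (- (e * e1)) \<in> P" using ideal_add[OF Pi] by metis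
      then show ?thesis by simp
    qed
  qed
  obtain n where "E ^ n = 0" using nilpotent_of_min EP by blast
  then obtain w where w: "(1 + E) * w = 1" using unit_of_nil by blast
  have uv: "(W * w) * U + (Z * w) * V = 1"
  proof -
    have "(W * w) * U + (Z * w) * V = (W * U + Z * V - 1 + 1) * w" by (simp add: algebra_simps)
    also have "\<dots> = 1" using WZE w by (simp add: add.commute)
    finally show ?thesis .
  qed
  define p where "p = W * w"
  define q where "q = Z * w"
  have "U * b - V * a = c * e * (- (be' * b0 + al' * a0))"
    unfolding U_def V_def cab(1) cab(2) by (simp add: algebra_simps)
  then have Ub: "U * b = V * a" using ce by simp
  define d where "d = p * a + q * b"
  have "a = d * U"
  proof -
    have "d * U = a * (p * U) + q * (U * b)" by (simp add: d_def algebra_simps)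
    also have "\<dots> = a * (p * U + q * V)" by (simp add: Ub algebra_simps)
    finally show ?thesis using uv by (simp add: p_def q_def)
  qed
  moreover have "b = d * V"
  proof -
    have "d * V = p * (V * a) + b * (q * V)" by (simp add: d_def algebra_simps)
    also have "\<dots> = b * (p * U + q * V)" by (simp add: Ub[symmetric] algebra_simps)
    finally show ?thesis using uv by (simp add: p_def q_def)
  qed
  ultimately show "\<exists>d a' b'. a = d * a' \<and> b = d * b' \<and> (\<exists>x y. x * a' + y * b' = 1)"
    using uv unfolding p_def[symmetric] q_def[symmetric] by blast
qed

end
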